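(* In the isotropic setting below, fix $r>0$, $F,F_p\in\mathrm{GL}^+(3)$. Then the set-valued right-hand sides of the Simo–Miehe flow rule and of the Lion flow rule coincide: $$-2\,F^{-1}\big[\mathcal N_r(\tau_e)\,B_e\big]F^{-T}\;=\;-F_p^{-1}\,\mathcal N_r(\Sigma_e)\,F_p^{-T}.$$ Consequently, a differentiable curve $t\mapsto C_p(t)=F_p(t)^TF_p(t)$ (at fixed $F$) satisfies the Simo–Miehe flow rule $\frac{d}{dt}[C_p^{-1}]\in-2F^{-1}[\mathcal N_r(\tau_e)B_e]F^{-T}$ if and only if it satisfies the Lion flow rule $\frac{d}{dt}[C_p^{-1}]\in-F_p^{-1}\mathcal N_r(\Sigma_e)F_p^{-T}$.
   Context: $W:\mathrm{GL}^+(3)\to\mathbb{R}$ is $C^1$, objective and isotropic ($W(QFR)=W(F)$ for all $Q,R\in\mathrm{SO}(3)$). $F_e=FF_p^{-1}$, $C_p=F_p^TF_p$, $B_e=F_eF_e^T$, $\Sigma_e=F_e^TDW(F_e)$, $\tau_e=DW(F_e)F_e^T$ (symmetric for isotropic $W$). $\langle X,Y\rangle=\mathrm{tr}(XY^T)$, $\|\cdot\|$ Frobenius norm, $\mathrm{dev}_3X=X-\frac13\mathrm{tr}(X)\mathbb{1}$. For $r>0$ and symmetric $S$, $\mathcal N_r(S)$ is the subdifferential of the indicator function of the convex set $\{S\in\mathrm{Sym}(3):\|\mathrm{dev}_3S\|\le r\}$ evaluated as in the paper: $\mathcal N_r(S)=\{0\}$ if $\|\mathrm{dev}_3S\|<r$,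 $\mathcal N_r(S)=\{\lambda\,\mathrm{dev}_3S/\|\mathrm{dev}_3S\|:\lambda\ge0\}$ if $\|\mathrm{dev}_3S\|=r$, and $\mathcal N_r(S)=\emptyset$ if $\|\mathrm{dev}_3S\|>r$. For matrices $M,N$ and a set $\mathcal A$ of matrices, $M\mathcal AN=\{MXN:X\in\mathcal A\}$. *)

theory Defs
  imports "HOL-Analysis.Analysis"
begin

type_synonym mat3 = "real^3^3"

definition GLp :: "mat3 set" where
  "GLp = {F. det F > 0}"

definition dev3 :: "mat3 \<Rightarrow> mat3" where
  "dev3 X = X - (trace X / 3) *\<^sub>R mat 1"

text \<open>Normal cone of the indicator of the set of matrices with norm of deviator at most r,
  evaluated as in the paper (Frobenius norm = norm on real^3^3).\<close>
definition Ncone :: "real \<Rightarrow> mat3 \<Rightarrow> mat3 set" where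
  "Ncone r S =
     (if norm (dev3 S) < r then {0}
      else if norm (dev3 S) = r then {l *\<^sub>R (dev3 S /\<^sub>R norm (dev3 S)) | l. l \<ge> 0}
      else {})"

text \<open>Elastic kinematic quantities; DW is the derivative (gradient) of W.\<close>
definition Fe :: "mat3 \<Rightarrow> mat3 \<Rightarrow> mat3" where
  "Fe F Fp = F ** matrix_inv Fp"

definition Cp :: "mat3 \<Rightarrow> mat3" where
  "Cp Fp = transpose Fp ** Fp"

definition Be :: "mat3 \<Rightarrow> mat3 \<Rightarrow> mat3" where
  "Be F Fp = Fe F Fp ** transpose (Fe F Fp)"

definition Sigma_e :: "(mat3 \<Rightarrow> mat3) \<Rightarrow> mat3 \<Rightarrow> mat3 \<Rightarrow> mat3" where
  "Sigma_e DW F Fp = transpose (Fe F Fp) ** DW (Fe F Fp)"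

definition tau_e :: "(mat3 \<Rightarrow> mat3) \<Rightarrow> mat3 \<Rightarrow> mat3 \<Rightarrow> mat3" where
  "tau_e DW F Fp = DW (Fe F Fp) ** transpose (Fe F Fp)"

definition SM_rhs :: "(mat3 \<Rightarrow> mat3) \<Rightarrow> real \<Rightarrow> mat3 \<Rightarrow> mat3 \<Rightarrow> mat3 set" where
  "SM_rhs DW r F Fp =
     (\<lambda>X. (-2) *\<^sub>R (matrix_inv F ** (X ** Be F Fp) ** transpose (matrix_inv F)))
       ` Ncone r (tau_e DW F Fp)"

definition Lion_rhs :: "(mat3 \<Rightarrow> mat3) \<Rightarrow> real \<Rightarrow> mat3 \<Rightarrow> mat3 \<Rightarrow> mat3 set" where
  "Lion_rhs DW r F Fp =
     (\<lambda>X. - (matrix_inv Fp ** X ** transpose (matrix_inv Fp)))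
       ` Ncone r (Sigma_e DW F Fp)"

end

theory Submission
  imports Defs
begin


definition Dm :: "3 \<Rightarrow> 3 \<Rightarrow> mat3" where
  "Dm a b = (\<chi> i j. if (i = a \<and> j = a) \<or> (i = b \<and> j = b) then 1 else 0)"
definition Km :: "3 \<Rightarrow> 3 \<Rightarrow> mat3" where
  "Km a b = (\<chi> i j. if i = a \<and> j = b then -1 else if i = b \<and> j = a then 1 else 0)"
definition rotc :: "3 \<Rightarrow> 3 \<Rightarrow> real \<Rightarrow> mat3" where
  "rotc a b t = mat 1 + (cos t - 1) *\<^sub>R Dm a b + sin t *\<^sub>R Km a b"

lemma three_neq: "(1::3) \<noteq> 2" "(1::3) \<noteq> 3" "(2::3) \<noteq> 3" "(2::3) \<noteq> 1" "(3::3) \<noteq> 1" "(3::3) \<noteq> 2"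
  by simp_all

lemma rotc_rot:
  assumes "a \<noteq> b"
  shows "rotation_matrix (rotc a b t)"
proof -
  have c: "(a = 1 \<and> b = 2) \<or> (a = 1 \<and> b = 3) \<or> (a = 2 \<and> b = 1) \<or> (a = 2 \<and> b = 3) \<or> (a = 3 \<and> b = 1) \<or> (a = 3 \<and> b = 2)"
    using assms exhaust_3[of a] exhaust_3[of b] by auto
  have sc: "sin t * sin t + cos t * cos t = 1" using sin_cos_squared_add[of t] by (simp add: power2_eq_square)
  show ?thesis
    unfolding rotation_matrix_def orthogonal_matrix
    using c
    by (auto simp: rotc_def Dm_def Km_def vec_eq_iff forall_3 sum_3 det_3 matrix_matrix_mult_def transpose_def mat_def
        algebra_simps sc)
qed

lemma mat_radd: "((A::mat3) + B) ** C = A ** C + B ** C"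
  by (vector matrix_matrix_mult_def sum.distrib[symmetric] field_simps)

lemma mat_scal_r: "(A::mat3) ** (k *\<^sub>R B) = k *\<^sub>R (A ** B)"
  by (simp add: matrix_scalar_ac scalar_matrix_assoc)

lemma mat_scal_l: "(k *\<^sub>R (A::mat3)) ** B = k *\<^sub>R (A ** B)"
  by (simp add: scalar_matrix_assoc)

lemma rotc_left: "rotc a b t ** (G::mat3) = G + (cos t - 1) *\<^sub>R (Dm a b ** G) + sin t *\<^sub>R (Km a b ** G)"
  unfolding rotc_def by (simp add: mat_radd mat_scal_l)

lemma rotc_right: "(G::mat3) ** rotc a b t = G + (cos t - 1) *\<^sub>R (G ** Dm a b) + sin t *\<^sub>R (G ** Km a b)"
  unfolding rotc_def matrix_add_ldistrib mat_scal_r by simp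

lemma curve_deriv:
  "((\<lambda>t::real. G + (cos t - 1) *\<^sub>R (X::mat3) + sin t *\<^sub>R Y) has_derivative (\<lambda>h. h *\<^sub>R Y)) (at 0)"
proof -
  have "((\<lambda>t::real. G + (cos t - 1) *\<^sub>R (X::mat3) + sin t *\<^sub>R Y) has_vector_derivative
      (0 + (- sin 0) *\<^sub>R X + cos 0 *\<^sub>R Y)) (at 0)"
    by (intro derivative_eq_intros) auto
  then show ?thesis by (simp add: has_vector_derivative_def)
qed

lemma zero_dir:
  assumes deriv: "(W has_derivative (\<lambda>H. DG \<bullet> H)) (at G)"
    and c: "\<And>t. W (G + (cos t - 1) *\<^sub>R (X::mat3) + sin t *\<^sub>R Y) = W G"
  shows "DG \<bullet> Y = 0"
proof -
  let ?c = "\<lambda>t::real. G + (cos t - 1) *\<^sub>R (X::mat3) + sin t *\<^sub>R Y"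
  have d1: "(?c has_derivative (\<lambda>h. h *\<^sub>R Y)) (at 0)" by (rule curve_deriv)
  have "?c 0 = G" by simp
  with deriv have d2: "(W has_derivative (\<lambda>H. DG \<bullet> H)) (at (?c 0))" by simp
  have "((W \<circ> ?c) has_derivative ((\<lambda>H. DG \<bullet> H) \<circ> (\<lambda>h. h *\<^sub>R Y))) (at 0)"
    by (rule diff_chain_at[OF d1 d2])
  moreover have "W \<circ> ?c = (\<lambda>t. W G)" using c by (simp add: o_def)
  ultimately have "((\<lambda>t. W G) has_derivative ((\<lambda>H. DG \<bullet> H) \<circ> (\<lambda>h. h *\<^sub>R Y))) (at 0)" by simp
  moreover have "((\<lambda>t::real. W G) has_derivative (\<lambda>h. 0)) (at 0)" by (rule has_derivative_const)
  ultimately have "((\<lambda>H. DG \<bullet> H) \<circ> (\<lambda>h. h *\<^sub>R Y)) = (\<lambda>h. 0)" by (rule has_derivative_unique)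
  then have "((\<lambda>H. DG \<bullet> H) \<circ> (\<lambda>h. h *\<^sub>R Y)) 1 = 0" by simp
  then show ?thesis by simp
qed

lemma sym_left:
  fixes D G :: mat3
  assumes "\<And>a b. a \<noteq> b \<Longrightarrow> D \<bullet> (Km a b ** G) = 0"
  shows "transpose (D ** transpose G) = D ** transpose G"
proof -
  have h: "D \<bullet> (Km 1 2 ** G) = 0" "D \<bullet> (Km 1 3 ** G) = 0" "D \<bullet> (Km 2 3 ** G) = 0"
    using assms by simp_all
  then show ?thesis
    by (simp add: Km_def vec_eq_iff forall_3 sum_3 matrix_matrix_mult_def transpose_def inner_vec_def algebra_simps)
qed

lemma sym_right:
  fixes D G :: mat3
  assumes "\<And>a b. a \<noteq> b \<Longrightarrow> D \<bullet> (G ** Km a b) = 0"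
  shows "transpose (transpose G ** D) = transpose G ** D"
proof -
  have h: "D \<bullet> (G ** Km 1 2) = 0" "D \<bullet> (G ** Km 1 3) = 0" "D \<bullet> (G ** Km 2 3) = 0"
    using assms by simp_all
  then show ?thesis
    by (simp add: Km_def vec_eq_iff forall_3 sum_3 matrix_matrix_mult_def transpose_def inner_vec_def algebra_simps)
qed


lemma inv_props:
  assumes "invertible (A::mat3)"
  shows "A ** matrix_inv A = mat 1" "matrix_inv A ** A = mat 1"
proof -
  have "\<exists>A'. A ** A' = mat 1 \<and> A' ** A = mat 1" using assms unfolding invertible_def by blast
  then have "A ** matrix_inv A = mat 1 \<and> matrix_inv A ** A = mat 1"
    unfolding matrix_inv_def by (rule someI_ex)
  then show "A ** matrix_inv A = mat 1" "matrix_inv A ** A = mat 1" by auto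
qed

lemma GLp_inv: "A \<in> GLp \<Longrightarrow> invertible A"
  unfolding GLp_def using invertible_det_nz by force

lemma iso_sym:
  fixes W :: "mat3 \<Rightarrow> real" and DW :: "mat3 \<Rightarrow> mat3"
  assumes deriv: "\<And>G. G \<in> GLp \<Longrightarrow> (W has_derivative (\<lambda>H. DW G \<bullet> H)) (at G)"
    and isotropic: "\<And>Q R G. rotation_matrix Q \<Longrightarrow> rotation_matrix R \<Longrightarrow> G \<in> GLp \<Longrightarrow>
                       W (Q ** G ** R) = W G"
    and G: "G \<in> GLp"
  shows "transpose (DW G ** transpose G) = DW G ** transpose G"
    "transpose (transpose G ** DW G) = transpose G ** DW G"
proof -
  have I: "rotation_matrix (mat 1 :: mat3)"
    unfolding rotation_matrix_def orthogonal_matrix by simp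
  show "transpose (DW G ** transpose G) = DW G ** transpose G"
  proof (rule sym_left)
    fix a b :: 3 assume ab: "a \<noteq> b"
    show "DW G \<bullet> (Km a b ** G) = 0"
    proof (rule zero_dir[OF deriv[OF G]])
      fix t
      have "W (rotc a b t ** G ** mat 1) = W G" by (rule isotropic[OF rotc_rot[OF ab] I G])
      then show "W (G + (cos t - 1) *\<^sub>R (Dm a b ** G) + sin t *\<^sub>R (Km a b ** G)) = W G"
        by (simp add: rotc_left)
    qed
  qed
  show "transpose (transpose G ** DW G) = transpose G ** DW G"
  proof (rule sym_right)
    fix a b :: 3 assume ab: "a \<noteq> b"
    show "DW G \<bullet> (G ** Km a b) = 0"
    proof (rule zero_dir[OF deriv[OF G]])
      fix t
      have "W (mat 1 ** G ** rotc a b t) = W G" by (rule isotropic[OF I rotc_rot[OF ab] G])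
      then show "W (G + (cos t - 1) *\<^sub>R (G ** Dm a b) + sin t *\<^sub>R (G ** Km a b)) = W G"
        by (simp add: rotc_right)
    qed
  qed
qed

lemma inner_trace: "(X::mat3) \<bullet> Y = trace (X ** transpose Y)"
  by (simp add: inner_vec_def trace_def matrix_matrix_mult_def transpose_def sum_3)

lemma mat_rsub: "((A::mat3) - B) ** C = A ** C - B ** C"
  by (vector matrix_matrix_mult_def sum_subtractf[symmetric] field_simps)

lemma mat_lsub: "(A::mat3) ** (B - C) = A ** B - A ** C"
  by (vector matrix_matrix_mult_def sum_subtractf[symmetric] field_simps)

lemma key_conj:
  fixes D E Ei :: mat3
  assumes symT: "transpose (D ** transpose E) = D ** transpose E"
    and symS: "transpose (transpose E ** D) = transpose E ** D"
    and EiE: "Ei ** E = mat 1"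
  shows "Ei ** (D ** transpose E) ** E = transpose E ** D"
proof -
  have "D ** transpose E = E ** transpose D"
    using symT by (simp add: matrix_transpose_mul)
  then have "Ei ** (D ** transpose E) ** E = (Ei ** E) ** transpose D ** E"
    by (simp add: matrix_mul_assoc)
  also have "\<dots> = transpose (transpose E ** D)" using EiE by (simp add: matrix_transpose_mul)
  also have "\<dots> = transpose E ** D" by (rule symS)
  finally show ?thesis .
qed

lemma dev_conj:
  fixes T E Ei :: mat3
  assumes EiE: "Ei ** E = mat 1" and EEi: "E ** Ei = mat 1"
  shows "Ei ** dev3 T ** E = dev3 (Ei ** T ** E)"
proof -
  have tr: "trace (Ei ** T ** E) = trace T"
  proof -
    have "trace (Ei ** T ** E) = trace (E ** (Ei ** T))" by (rule trace_mul_sym)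
    also have "\<dots> = trace T" using EEi by (simp add: matrix_mul_assoc)
    finally show ?thesis .
  qed
  show ?thesis unfolding dev3_def
    by (simp add: mat_rsub mat_lsub mat_scal_r mat_scal_l EiE tr)
qed

lemma sym_dev: "transpose (X::mat3) = X \<Longrightarrow> transpose (dev3 X) = dev3 X"
  unfolding dev3_def by (simp add: transpose_def vec_eq_iff mat_def)

lemma norm_conj:
  fixes S T E Ei :: mat3
  assumes EiE: "Ei ** E = mat 1" and EEi: "E ** Ei = mat 1"
    and sS: "transpose S = S" and sT: "transpose T = T" and S: "S = Ei ** T ** E"
  shows "norm S = norm T"
proof -
  have "S \<bullet> S = trace (S ** S)" using sS by (simp add: inner_trace)
  also have "S ** S = Ei ** (T ** T) ** E"
  proof -
    have "S ** S = Ei ** T ** (E ** Ei) ** T ** E" unfolding S by (simp only: matrix_mul_assoc)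
    also have "\<dots> = Ei ** T ** T ** E" using EEi by simp
    also have "\<dots> = Ei ** (T ** T) ** E" by (simp only: matrix_mul_assoc)
    finally show ?thesis .
  qed
  also have "trace (Ei ** (T ** T) ** E) = trace (E ** (Ei ** (T ** T)))" by (rule trace_mul_sym)
  also have "\<dots> = trace (T ** T)" using EEi by (simp add: matrix_mul_assoc)
  also have "\<dots> = T \<bullet> T" using sT by (simp add: inner_trace)
  finally have "S \<bullet> S = T \<bullet> T" .
  then show ?thesis by (simp add: norm_eq_sqrt_inner)
qed



lemma sets_eq:
  fixes W :: "mat3 \<Rightarrow> real" and DW :: "mat3 \<Rightarrow> mat3"
  assumes deriv: "\<And>G. G \<in> GLp \<Longrightarrow> (W has_derivative (\<lambda>H. DW G \<bullet> H)) (at G)"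
    and isotropic: "\<And>Q R G. rotation_matrix Q \<Longrightarrow> rotation_matrix R \<Longrightarrow> G \<in> GLp \<Longrightarrow>
                       W (Q ** G ** R) = W G"
    and r_pos: "r > 0"
    and F_GL: "F \<in> GLp"
    and Fp_GL: "Fp \<in> GLp"
  shows "SM_rhs DW r F Fp = Lion_rhs DW r F Fp"
proof -
  define Pi where "Pi = matrix_inv Fp"
  define Fi where "Fi = matrix_inv F"
  define E where "E = F ** Pi"
  define Ei where "Ei = Fp ** Fi"
  have FFi: "F ** Fi = mat 1" and FiF: "Fi ** F = mat 1"
    using inv_props[OF GLp_inv[OF F_GL]] unfolding Fi_def by auto
  have PPi: "Fp ** Pi = mat 1" and PiP: "Pi ** Fp = mat 1"
    using inv_props[OF GLp_inv[OF Fp_GL]] unfolding Pi_def by auto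
  have FeE: "Fe F Fp = E" unfolding Fe_def E_def Pi_def ..
  have EiE: "Ei ** E = mat 1"
  proof -
    have "Ei ** E = Fp ** (Fi ** F) ** Pi" unfolding Ei_def E_def by (simp only: matrix_mul_assoc)
    also have "\<dots> = mat 1" using FiF PPi by simp
    finally show ?thesis .
  qed
  have EEi: "E ** Ei = mat 1"
  proof -
    have "E ** Ei = F ** (Pi ** Fp) ** Fi" unfolding Ei_def E_def by (simp only: matrix_mul_assoc)
    also have "\<dots> = mat 1" using PiP FFi by simp
    finally show ?thesis .
  qed
  have dPi: "det Pi > 0"
  proof -
    have "det Pi * det Fp = 1" using PiP det_mul[of Pi Fp] by simp
    moreover have "det Fp > 0" using Fp_GL unfolding GLp_def by simp
    ultimately show ?thesis by (metis zero_less_mult_pos2 zero_less_one)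
  qed
  have EGL: "E \<in> GLp"
    using F_GL dPi unfolding GLp_def E_def by (simp add: det_mul)
  define D where "D = DW E"
  have symT: "transpose (D ** transpose E) = D ** transpose E"
    and symS: "transpose (transpose E ** D) = transpose E ** D"
    using iso_sym[OF deriv isotropic EGL] unfolding D_def by auto
  define tau where "tau = D ** transpose E"
  define Sig where "Sig = transpose E ** D"
  have tauE: "tau_e DW F Fp = tau" unfolding tau_e_def FeE tau_def D_def ..
  have SigE: "Sigma_e DW F Fp = Sig" unfolding Sigma_e_def FeE Sig_def D_def ..
  have conj: "Ei ** tau ** E = Sig"
    unfolding tau_def Sig_def by (rule key_conj[OF symT symS EiE])
  have devS: "dev3 Sig = Ei ** dev3 tau ** E"
    using dev_conj[OF EiE EEi, of tau] conj by simp
  have nrm: "norm (dev3 Sig) = norm (dev3 tau)"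
    by (rule norm_conj[OF EiE EEi sym_dev sym_dev devS])
      (use symS symT in \<open>simp_all add: tau_def Sig_def\<close>)
  have BeE: "Be F Fp = E ** transpose E" unfolding Be_def FeE ..
  define g where "g = (\<lambda>Y. - (Pi ** Y ** transpose Pi))"
  have Fi_eq: "Fi = Pi ** Ei"
  proof -
    have "Pi ** Ei = (Pi ** Fp) ** Fi" unfolding Ei_def by (simp only: matrix_mul_assoc)
    then show ?thesis using PiP by simp
  qed
  have ETFi: "transpose E ** transpose Fi = transpose Pi"
  proof -
    have "transpose E ** transpose Fi = transpose (Fi ** E)" by (simp add: matrix_transpose_mul)
    also have "Fi ** E = (Fi ** F) ** Pi" unfolding E_def by (simp only: matrix_mul_assoc)
    finally show ?thesis using FiF by simp
  qed
  have mapeq: "(-2) *\<^sub>R (Fi ** (X ** Be F Fp) ** transpose Fi) = g (2 *\<^sub>R (Ei ** X ** E))" for X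
  proof -
    have "Fi ** (X ** (E ** transpose E)) ** transpose Fi = Fi ** X ** E ** (transpose E ** transpose Fi)"
      by (simp only: matrix_mul_assoc)
    also have "\<dots> = Pi ** (Ei ** X ** E) ** transpose Pi"
      unfolding ETFi unfolding Fi_eq by (simp only: matrix_mul_assoc)
    finally show ?thesis unfolding BeE g_def by (simp add: mat_scal_r mat_scal_l)
  qed
  have lhs: "SM_rhs DW r F Fp = (\<lambda>X. g (2 *\<^sub>R (Ei ** X ** E))) ` Ncone r tau"
    unfolding SM_rhs_def tauE Fi_def[symmetric] mapeq ..
  have rhs: "Lion_rhs DW r F Fp = g ` Ncone r Sig"
    unfolding Lion_rhs_def SigE g_def Pi_def ..
  have scl: "Ei ** (l *\<^sub>R Y) ** E = l *\<^sub>R (Ei ** Y ** E)" for l Y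
    by (simp add: mat_scal_r mat_scal_l)
  consider "norm (dev3 tau) < r" | "norm (dev3 tau) = r" | "norm (dev3 tau) > r" by linarith
  then show ?thesis
  proof cases
    case 1
    then show ?thesis unfolding lhs rhs Ncone_def using nrm by (simp add: g_def)
  next
    case 3
    then show ?thesis unfolding lhs rhs Ncone_def using nrm by simp
  next
    case 2
    define n where "n = norm (dev3 tau)"
    have nS: "norm (dev3 Sig) = n" using nrm n_def by simp
    have U: "Ei ** (dev3 tau /\<^sub>R n) ** E = dev3 Sig /\<^sub>R n"
      using scl devS by simp
    have A: "Ncone r tau = {l *\<^sub>R (dev3 tau /\<^sub>R n) | l. l \<ge> 0}"
      unfolding Ncone_def n_def using 2 by simp
    have B: "Ncone r Sig = {l *\<^sub>R (dev3 Sig /\<^sub>R n) | l. l \<ge> 0}"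
      unfolding Ncone_def using 2 nS n_def by simp
    have f: "g (2 *\<^sub>R (Ei ** (l *\<^sub>R (dev3 tau /\<^sub>R n)) ** E)) = g ((2 * l) *\<^sub>R (dev3 Sig /\<^sub>R n))" for l
      by (simp add: scl devS mult.assoc)
    show ?thesis unfolding lhs rhs A B
    proof (rule set_eqI, rule iffI)
      fix x assume "x \<in> (\<lambda>X. g (2 *\<^sub>R (Ei ** X ** E))) ` {l *\<^sub>R (dev3 tau /\<^sub>R n) |l. 0 \<le> l}"
      then obtain l where l: "l \<ge> 0" "x = g (2 *\<^sub>R (Ei ** (l *\<^sub>R (dev3 tau /\<^sub>R n)) ** E))" by auto
      then have "x = g ((2 * l) *\<^sub>R (dev3 Sig /\<^sub>R n))" using f by simp
      moreover have "2 * l \<ge> 0" using l by simp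
      ultimately show "x \<in> g ` {l *\<^sub>R (dev3 Sig /\<^sub>R n) |l. 0 \<le> l}" by blast
    next
      fix x assume "x \<in> g ` {l *\<^sub>R (dev3 Sig /\<^sub>R n) |l. 0 \<le> l}"
      then obtain l where l: "l \<ge> 0" "x = g (l *\<^sub>R (dev3 Sig /\<^sub>R n))" by auto
      then have "x = g (2 *\<^sub>R (Ei ** ((l / 2) *\<^sub>R (dev3 tau /\<^sub>R n)) ** E))" using f[of "l/2"] by simp
      moreover have "l / 2 \<ge> 0" using l by simp
      ultimately show "x \<in> (\<lambda>X. g (2 *\<^sub>R (Ei ** X ** E))) ` {l *\<^sub>R (dev3 tau /\<^sub>R n) |l. 0 \<le> l}" by blast
    qed
  qed
qed



theorem mainTheorem6:
  fixes W :: "mat3 \<Rightarrow> real" and DW :: "mat3 \<Rightarrow> mat3"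
    and r :: real and F Fp :: mat3
  assumes deriv: "\<And>G. G \<in> GLp \<Longrightarrow> (W has_derivative (\<lambda>H. DW G \<bullet> H)) (at G)"
    and C1: "continuous_on GLp DW"
    and isotropic: "\<And>Q R G. rotation_matrix Q \<Longrightarrow> rotation_matrix R \<Longrightarrow> G \<in> GLp \<Longrightarrow>
                       W (Q ** G ** R) = W G"
    and r_pos: "r > 0"
    and F_GL: "F \<in> GLp"
    and Fp_GL: "Fp \<in> GLp"
  shows "SM_rhs DW r F Fp = Lion_rhs DW r F Fp \<and>
    (\<forall>(T :: real set) (Fpc :: real \<Rightarrow> mat3) (D :: real \<Rightarrow> mat3).
       (\<forall>t\<in>T. Fpc t \<in> GLp) \<longrightarrow>
       (\<forall>t\<in>T. ((\<lambda>s. matrix_inv (Cp (Fpc s))) has_vector_derivative D t) (at t within T)) \<longrightarrow>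
       ((\<forall>t\<in>T. D t \<in> SM_rhs DW r F (Fpc t)) \<longleftrightarrow> (\<forall>t\<in>T. D t \<in> Lion_rhs DW r F (Fpc t))))"
  proof -
  have P: "\<And>Fp'. Fp' \<in> GLp \<Longrightarrow> SM_rhs DW r F Fp' = Lion_rhs DW r F Fp'"
    by (rule sets_eq[OF deriv isotropic r_pos F_GL])
  show ?thesis
    using P Fp_GL by auto
qed

end
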